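(* Let $R$ be a nonzero ring and $*\in\{l,r,\emptyset\}$. Then the set $\mathbb{L}_*(R)$ has maximal elements with respect to inclusion, i.e. $\max\mathbb{L}_*(R)\neq\emptyset$.
   Context: Rings are associative with $1$. A multiplicative set $S\subseteq R$: $SS\subseteq S$, $1\in S$, $0\notin S$. $R\langle S^{-1}\rangle=R\langle X_S\rangle/I_S$, where $R\langle X_S\rangle$ is freely generated by $R$ and noncommuting indeterminates $x_s$ ($s\in S$) and $I_S$ is generated by $sx_s-1,x_ss-1$. $S$ is left localizable if $R\langle S^{-1}\rangle\ne0$ and every element is of the form $(x_s+I_S)(r+I_S)$; right localizable if $R\langle S^{-1}\rangle\ne0$ and every element is of the form $(r+I_S)(x_s+I_S)$ ($s\in S,r\in R$); localizable if both. $\mathbb{L}_l(R)$, $\mathbb{L}_r(R)$, $\mathbb{L}_\emptyset(R)$ are the sets of left localizable, right localizable, localizable sets. *)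

theory Defs
  imports Main
begin

text \<open>Terms of the free ring generated by the elements of R and noncommuting
indeterminates x_s.  Constructor C r stands for r, X s for x_s.\<close>
datatype 'a rterm = C 'a | X 'a | TZero | TOne
  | TAdd "'a rterm" "'a rterm" | TNeg "'a rterm" | TMul "'a rterm" "'a rterm"

fun wf_term :: "'a set \<Rightarrow> 'a rterm \<Rightarrow> bool" where
  "wf_term S (C r) = True"
| "wf_term S (X s) = (s \<in> S)"
| "wf_term S TZero = True"
| "wf_term S TOne = True"
| "wf_term S (TAdd a b) = (wf_term S a \<and> wf_term S b)"
| "wf_term S (TNeg a) = wf_term S a"
| "wf_term S (TMul a b) = (wf_term S a \<and> wf_term S b)"

text \<open>The congruence whose quotient is R<S^-1> = R<X_S>/I_S: ring axioms,
the relations of R (R is a subring of R<X_S>), and s x_s = 1 = x_s s.\<close>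
inductive loc_eq :: "('a::ring_1) set \<Rightarrow> 'a rterm \<Rightarrow> 'a rterm \<Rightarrow> bool" for S where
  refl: "loc_eq S a a"
| sym: "loc_eq S a b \<Longrightarrow> loc_eq S b a"
| trans: "loc_eq S a b \<Longrightarrow> loc_eq S b c \<Longrightarrow> loc_eq S a c"
| cong_add: "loc_eq S a a' \<Longrightarrow> loc_eq S b b' \<Longrightarrow> loc_eq S (TAdd a b) (TAdd a' b')"
| cong_neg: "loc_eq S a a' \<Longrightarrow> loc_eq S (TNeg a) (TNeg a')"
| cong_mul: "loc_eq S a a' \<Longrightarrow> loc_eq S b b' \<Longrightarrow> loc_eq S (TMul a b) (TMul a' b')"
| add_assoc: "loc_eq S (TAdd (TAdd a b) c) (TAdd a (TAdd b c))"
| add_comm: "loc_eq S (TAdd a b) (TAdd b a)"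
| add_zero: "loc_eq S (TAdd TZero a) a"
| add_neg: "loc_eq S (TAdd (TNeg a) a) TZero"
| mul_assoc: "loc_eq S (TMul (TMul a b) c) (TMul a (TMul b c))"
| mul_one_l: "loc_eq S (TMul TOne a) a"
| mul_one_r: "loc_eq S (TMul a TOne) a"
| distr_l: "loc_eq S (TMul a (TAdd b c)) (TAdd (TMul a b) (TMul a c))"
| distr_r: "loc_eq S (TMul (TAdd a b) c) (TAdd (TMul a c) (TMul b c))"
| C_add: "loc_eq S (C (r + r')) (TAdd (C r) (C r'))"
| C_mul: "loc_eq S (C (r * r')) (TMul (C r) (C r'))"
| C_one: "loc_eq S (C 1) TOne"
| C_zero: "loc_eq S (C 0) TZero"
| inv_r: "s \<in> S \<Longrightarrow> loc_eq S (TMul (C s) (X s)) TOne"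
| inv_l: "s \<in> S \<Longrightarrow> loc_eq S (TMul (X s) (C s)) TOne"

definition mult_set :: "('a::ring_1) set \<Rightarrow> bool" where
  "mult_set S \<longleftrightarrow> (\<forall>a\<in>S. \<forall>b\<in>S. a * b \<in> S) \<and> 1 \<in> S \<and> 0 \<notin> S"

definition loc_nonzero :: "('a::ring_1) set \<Rightarrow> bool" where
  "loc_nonzero S \<longleftrightarrow> \<not> loc_eq S TOne TZero"

definition left_localizable :: "('a::ring_1) set \<Rightarrow> bool" where
  "left_localizable S \<longleftrightarrow> mult_set S \<and> loc_nonzero S \<and>
     (\<forall>t. wf_term S t \<longrightarrow> (\<exists>s\<in>S. \<exists>r. loc_eq S t (TMul (X s) (C r))))"

definition right_localizable :: "('a::ring_1) set \<Rightarrow> bool" where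
  "right_localizable S \<longleftrightarrow> mult_set S \<and> loc_nonzero S \<and>
     (\<forall>t. wf_term S t \<longrightarrow> (\<exists>s\<in>S. \<exists>r. loc_eq S t (TMul (C r) (X s))))"

datatype side = Lside | Rside | Bside

definition Loc :: "side \<Rightarrow> ('a::ring_1) set set" where
  "Loc k = (case k of
      Lside \<Rightarrow> {S. left_localizable S}
    | Rside \<Rightarrow> {S. right_localizable S}
    | Bside \<Rightarrow> {S. left_localizable S \<and> right_localizable S})"

definition max_elems :: "'b set set \<Rightarrow> 'b set set" where
  "max_elems F = {S\<in>F. \<forall>T\<in>F. S \<subseteq> T \<longrightarrow> T = S}"

end

theory Submission
  imports Defs
begin

declare loc_eq.trans[trans]

lemma loc_eq_mono: "loc_eq S a b \<Longrightarrow> S \<subseteq> T \<Longrightarrow> loc_eq T a b"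
  by (induction rule: loc_eq.induct) (auto intro: loc_eq.intros)

lemma loc_eq_fin: "loc_eq S a b \<Longrightarrow> \<exists>F. finite F \<and> F \<subseteq> S \<and> loc_eq F a b"
proof (induction rule: loc_eq.induct)
  case (trans a b c)
  then obtain F G where "finite F" "F \<subseteq> S" "loc_eq F a b" "finite G" "G \<subseteq> S" "loc_eq G b c" by blast
  then show ?case
    by (intro exI[of _ "F \<union> G"]) (auto intro: loc_eq.trans loc_eq_mono)
next
  case (cong_add a a' b b')
  then obtain F G where "finite F" "F \<subseteq> S" "loc_eq F a a'" "finite G" "G \<subseteq> S" "loc_eq G b b'" by blast
  then show ?case
    by (intro exI[of _ "F \<union> G"]) (auto intro: loc_eq.cong_add loc_eq_mono)
next
  case (cong_mul a a' b b')
  then obtain F G where "finite F" "F \<subseteq> S" "loc_eq F a a'" "finite G" "G \<subseteq> S" "loc_eq G b b'" by blast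
  then show ?case
    by (intro exI[of _ "F \<union> G"]) (auto intro: loc_eq.cong_mul loc_eq_mono)
next
  case (inv_r s)
  then show ?case by (intro exI[of _ "{s}"]) (auto intro: loc_eq.inv_r)
next
  case (inv_l s)
  then show ?case by (intro exI[of _ "{s}"]) (auto intro: loc_eq.inv_l)
qed (auto intro: loc_eq.intros)

lemma wf_mono: "wf_term S t \<Longrightarrow> S \<subseteq> T \<Longrightarrow> wf_term T t"
  by (induction t) auto

lemma wf_fin: "wf_term S t \<Longrightarrow> \<exists>F. finite F \<and> F \<subseteq> S \<and> wf_term F t"
proof (induction t)
  case (X s) then show ?case by (intro exI[of _ "{s}"]) auto
next
  case (TAdd a b)
  then obtain F G where "finite F" "F \<subseteq> S" "wf_term F a" "finite G" "G \<subseteq> S" "wf_term G b" by auto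
  then show ?case by (intro exI[of _ "F \<union> G"]) (auto intro: wf_mono)
next
  case (TMul a b)
  then obtain F G where "finite F" "F \<subseteq> S" "wf_term F a" "finite G" "G \<subseteq> S" "wf_term G b" by auto
  then show ?case by (intro exI[of _ "F \<union> G"]) (auto intro: wf_mono)
qed auto

definition loc_form :: "('a \<Rightarrow> 'a \<Rightarrow> 'a rterm) \<Rightarrow> ('a::ring_1) set \<Rightarrow> bool" where
  "loc_form f S \<longleftrightarrow> mult_set S \<and> loc_nonzero S \<and>
     (\<forall>t. wf_term S t \<longrightarrow> (\<exists>s\<in>S. \<exists>r. loc_eq S t (f s r)))"

lemma left_form: "left_localizable S = loc_form (\<lambda>s r. TMul (X s) (C r)) S"
  unfolding left_localizable_def loc_form_def ..

lemma right_form: "right_localizable S = loc_form (\<lambda>s r. TMul (C r) (X s)) S"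
  unfolding right_localizable_def loc_form_def ..

lemma lf_ms: "loc_form f S \<Longrightarrow> mult_set S" by (simp add: loc_form_def)
lemma lf_nz: "loc_form f S \<Longrightarrow> \<not> loc_eq S TOne TZero" by (simp add: loc_form_def loc_nonzero_def)
lemma lf_rep: "loc_form f S \<Longrightarrow> wf_term S t \<Longrightarrow> \<exists>s\<in>S. \<exists>r. loc_eq S t (f s r)"
  by (simp add: loc_form_def)

lemma chain_union:
  assumes ne: "\<C> \<noteq> {}" and ch: "subset.chain \<A> \<C>" and P: "\<And>S. S \<in> \<C> \<Longrightarrow> loc_form f S"
  shows "loc_form f (\<Union>\<C>)"
proof -
  have fin: "\<exists>S\<in>\<C>. F \<subseteq> S" if "finite F" "F \<subseteq> \<Union>\<C>" for F
    using finite_subset_Union_chain[OF that ne ch] by blast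
  have ms: "mult_set (\<Union>\<C>)"
    unfolding mult_set_def
  proof (intro conjI ballI)
    fix a b assume "a \<in> \<Union>\<C>" "b \<in> \<Union>\<C>"
    then have "{a,b} \<subseteq> \<Union>\<C>" by simp
    then have "\<exists>S\<in>\<C>. {a,b} \<subseteq> S" by (intro fin) simp_all
    then obtain S where S: "S \<in> \<C>" "{a,b} \<subseteq> S" by blast
    then have "mult_set S" using P lf_ms by blast
    then have "a * b \<in> S" using S(2) unfolding mult_set_def by simp
    then show "a * b \<in> \<Union>\<C>" using S(1) by blast
  next
    from ne obtain S where S: "S \<in> \<C>" by blast
    then have "mult_set S" using P lf_ms by blast
    then have "1 \<in> S" unfolding mult_set_def by simp
    then show "1 \<in> \<Union>\<C>" using S by blast
  next
    show "0 \<notin> \<Union>\<C>"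
    proof
      assume "0 \<in> \<Union>\<C>"
      then obtain S where S: "S \<in> \<C>" "0 \<in> S" by blast
      then have "mult_set S" using P lf_ms by blast
      then show False using S(2) unfolding mult_set_def by simp
    qed
  qed
  have nz: "loc_nonzero (\<Union>\<C>)"
    unfolding loc_nonzero_def
  proof
    assume h: "loc_eq (\<Union>\<C>) TOne TZero"
    obtain F where F: "finite F" "F \<subseteq> \<Union>\<C>" "loc_eq F TOne TZero" using loc_eq_fin[OF h] by blast
    obtain S where S: "S \<in> \<C>" "F \<subseteq> S" using fin[OF F(1) F(2)] by blast
    have "loc_eq S TOne TZero" by (rule loc_eq_mono[OF F(3) S(2)])
    then show False using lf_nz[OF P[OF S(1)]] by simp
  qed
  have "\<exists>s\<in>\<Union>\<C>. \<exists>r. loc_eq (\<Union>\<C>) t (f s r)" if wt: "wf_term (\<Union>\<C>) t" for t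
  proof -
    obtain F where F: "finite F" "F \<subseteq> \<Union>\<C>" "wf_term F t" using wf_fin[OF wt] by blast
    obtain S where S: "S \<in> \<C>" "F \<subseteq> S" using fin[OF F(1) F(2)] by blast
    have "wf_term S t" by (rule wf_mono[OF F(3) S(2)])
    with lf_rep[OF P[OF S(1)]] obtain s r where sr: "s \<in> S" "loc_eq S t (f s r)" by blast
    have "loc_eq (\<Union>\<C>) t (f s r)" by (rule loc_eq_mono[OF sr(2)]) (use S(1) in blast)
    moreover have "s \<in> \<Union>\<C>" using sr(1) S(1) by blast
    ultimately show ?thesis by blast
  qed
  with ms nz show ?thesis unfolding loc_form_def by blast
qed

fun ev :: "('a::ring_1) rterm \<Rightarrow> 'a" where
  "ev (C r) = r" | "ev (X s) = 1" | "ev TZero = 0" | "ev TOne = 1"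
| "ev (TAdd a b) = ev a + ev b" | "ev (TNeg a) = - ev a" | "ev (TMul a b) = ev a * ev b"

lemma ev_sound: "loc_eq {1} a b \<Longrightarrow> ev a = ev b"
  by (induction rule: loc_eq.induct) (auto simp: algebra_simps)

lemma X1: "loc_eq {1} (X 1) TOne"
proof -
  have "loc_eq {1} (X 1) (TMul (X 1) TOne)" by (rule loc_eq.sym, rule loc_eq.mul_one_r)
  moreover have "loc_eq {1} (TMul (X 1) TOne) (TMul (X 1) (C 1))"
    by (intro loc_eq.cong_mul loc_eq.refl loc_eq.sym[OF loc_eq.C_one])
  moreover have "loc_eq {1} (TMul (X 1) (C 1)) TOne" by (rule loc_eq.inv_l) simp
  ultimately show ?thesis by (blast intro: loc_eq.trans)
qed

lemma wf1: "wf_term {1} t \<Longrightarrow> loc_eq {1} t (C (ev t))"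
proof (induction t)
  case (C x) then show ?case by (simp add: loc_eq.refl)
next
  case (X x) then have "x = 1" by simp
  then show ?case using loc_eq.trans[OF X1 loc_eq.sym[OF loc_eq.C_one]] by simp
next
  case TZero then show ?case by (simp add: loc_eq.sym loc_eq.C_zero)
next
  case TOne then show ?case by (simp add: loc_eq.sym loc_eq.C_one)
next
  case (TAdd a b)
  then have "loc_eq {1} (TAdd a b) (TAdd (C (ev a)) (C (ev b)))" by (auto intro: loc_eq.cong_add)
  then show ?case using loc_eq.trans loc_eq.sym[OF loc_eq.C_add] by fastforce
next
  case (TMul a b)
  then have "loc_eq {1} (TMul a b) (TMul (C (ev a)) (C (ev b)))" by (auto intro: loc_eq.cong_mul)
  then show ?case using loc_eq.trans loc_eq.sym[OF loc_eq.C_mul] by fastforce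
next
  case (TNeg a)
  then have h: "loc_eq {1} (TNeg a) (TNeg (C (ev a)))" by (auto intro: loc_eq.cong_neg)
  have "loc_eq {1} (C (- ev a)) (TNeg (C (ev a)))"
  proof -
    let ?n = "C (- ev a)" and ?m = "TNeg (C (ev a))" and ?c = "C (ev a)"
    have "loc_eq {1} ?n (TAdd TZero ?n)" by (rule loc_eq.sym, rule loc_eq.add_zero)
    also have "loc_eq {1} (TAdd TZero ?n) (TAdd (TAdd ?m ?c) ?n)"
      by (intro loc_eq.cong_add loc_eq.refl loc_eq.sym[OF loc_eq.add_neg])
    also have "loc_eq {1} (TAdd (TAdd ?m ?c) ?n) (TAdd ?m (TAdd ?c ?n))" by (rule loc_eq.add_assoc)
    also have "loc_eq {1} (TAdd ?c ?n) (C (ev a + - ev a))" by (rule loc_eq.sym, rule loc_eq.C_add)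
    hence "loc_eq {1} (TAdd ?c ?n) TZero"
      using loc_eq.C_zero[of "{1}"] loc_eq.trans by fastforce
    hence "loc_eq {1} (TAdd ?m (TAdd ?c ?n)) (TAdd ?m TZero)"
      by (intro loc_eq.cong_add loc_eq.refl)
    also have "loc_eq {1} (TAdd ?m TZero) (TAdd TZero ?m)" by (rule loc_eq.add_comm)
    also have "loc_eq {1} (TAdd TZero ?m) ?m" by (rule loc_eq.add_zero)
    finally show ?thesis .
  qed
  with h show ?case using loc_eq.trans loc_eq.sym by fastforce
qed

lemma one_ms: "(0::'a::ring_1) \<noteq> 1 \<Longrightarrow> mult_set ({1}::'a set)"
  unfolding mult_set_def by auto

lemma one_nz: "(0::'a::ring_1) \<noteq> 1 \<Longrightarrow> loc_nonzero ({1}::'a set)"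
  unfolding loc_nonzero_def using ev_sound[of "TOne::'a rterm" TZero] by auto

lemma one_left: "(0::'a::ring_1) \<noteq> 1 \<Longrightarrow> left_localizable ({1}::'a set)"
  unfolding left_localizable_def
proof (intro conjI one_ms one_nz allI impI)
  fix t :: "'a rterm" assume "0 \<noteq> (1::'a)" "wf_term {1} t"
  have "loc_eq {1} (TMul (X 1) (C (ev t))) (TMul TOne (C (ev t)))"
    by (intro loc_eq.cong_mul X1 loc_eq.refl)
  also have "loc_eq {1} (TMul TOne (C (ev t))) (C (ev t))" by (rule loc_eq.mul_one_l)
  finally show "\<exists>s\<in>{1}. \<exists>r. loc_eq {1} t (TMul (X s) (C r))"
    using loc_eq.trans[OF wf1[OF \<open>wf_term {1} t\<close>] loc_eq.sym] by blast
qed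

lemma one_right: "(0::'a::ring_1) \<noteq> 1 \<Longrightarrow> right_localizable ({1}::'a set)"
  unfolding right_localizable_def
proof (intro conjI one_ms one_nz allI impI)
  fix t :: "'a rterm" assume "0 \<noteq> (1::'a)" "wf_term {1} t"
  have "loc_eq {1} (TMul (C (ev t)) (X 1)) (TMul (C (ev t)) TOne)"
    by (intro loc_eq.cong_mul X1 loc_eq.refl)
  also have "loc_eq {1} (TMul (C (ev t)) TOne) (C (ev t))" by (rule loc_eq.mul_one_r)
  finally show "\<exists>s\<in>{1}. \<exists>r. loc_eq {1} t (TMul (C r) (X s))"
    using loc_eq.trans[OF wf1[OF \<open>wf_term {1} t\<close>] loc_eq.sym] by blast
qed

theorem theorem1p9:
  fixes k :: side
  assumes "(0::'a::ring_1) \<noteq> 1"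
  shows "max_elems (Loc k :: 'a set set) \<noteq> {}"
proof -
  have ne: "(Loc k :: 'a set set) \<noteq> {}"
    using one_left[OF assms] one_right[OF assms] by (cases k) (auto simp: Loc_def)
  have "\<Union>\<C> \<in> (Loc k :: 'a set set)" if "\<C> \<noteq> {}" "subset.chain (Loc k) \<C>" for \<C>
  proof -
    have sub: "\<C> \<subseteq> Loc k" using that(2) unfolding subset.chain_def by blast
    have L: "left_localizable (\<Union>\<C>)" if "\<And>S. S \<in> \<C> \<Longrightarrow> left_localizable S"
      unfolding left_form by (rule chain_union[OF \<open>\<C> \<noteq> {}\<close> \<open>subset.chain (Loc k) \<C>\<close>])
        (use that in \<open>simp add: left_form\<close>)
    have R: "right_localizable (\<Union>\<C>)" if "\<And>S. S \<in> \<C> \<Longrightarrow> right_localizable S"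
      unfolding right_form by (rule chain_union[OF \<open>\<C> \<noteq> {}\<close> \<open>subset.chain (Loc k) \<C>\<close>])
        (use that in \<open>simp add: right_form\<close>)
    show ?thesis
    proof (cases k)
      case Lside
      have e: "(Loc k :: 'a set set) = {S. left_localizable S}" using Lside by (simp add: Loc_def)
      have "left_localizable (\<Union>\<C>)" by (rule L) (use sub e in blast)
      then show ?thesis using e by simp
    next
      case Rside
      have e: "(Loc k :: 'a set set) = {S. right_localizable S}" using Rside by (simp add: Loc_def)
      have "right_localizable (\<Union>\<C>)" by (rule R) (use sub e in blast)
      then show ?thesis using e by simp
    next
      case Bside
      have e: "(Loc k :: 'a set set) = {S. left_localizable S \<and> right_localizable S}" using Bside by (simp add: Loc_def)
      have "left_localizable (\<Union>\<C>)" by (rule L) (use sub e in blast)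
      moreover have "right_localizable (\<Union>\<C>)" by (rule R) (use sub e in blast)
      ultimately show ?thesis using e by simp
    qed
  qed
  then have "\<exists>M\<in>(Loc k :: 'a set set). \<forall>X\<in>Loc k. M \<subseteq> X \<longrightarrow> X = M"
    by (rule subset_Zorn_nonempty[OF ne])
  then obtain M :: "'a set" where "M \<in> Loc k" "\<forall>X\<in>Loc k. M \<subseteq> X \<longrightarrow> X = M" by blast
  then have "M \<in> max_elems (Loc k :: 'a set set)" unfolding max_elems_def by blast
  then show ?thesis by blast
qed

end
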